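(* Let $\Delta\in\mathfrak{gl}_n(A)$ be such that $\Phi$ is right compatible with $N$, let $\alpha\in\mathfrak{gl}_n(R)$ and let $u\in GL_n(R)$ satisfy $\delta u=\Delta^\alpha(u)$. Then $N^\delta\subset G_u$.
   Context: Let $p$ be an odd prime, $R$ the unique complete discrete valuation ring with maximal ideal $pR$ and residue field an algebraic closure of $\mathbb F_p$; $\phi$ the unique lift of Frobenius, $\delta a=(\phi(a)-a^p)/p$; on matrices $\phi,\delta$ act entrywise, $u^{(p)}=(u_{ij}^p)$. $x$ is an $n\times n$ matrix of indeterminates, $A=R[x,\det(x)^{-1}]^\wedge$. For $\Delta\in\mathfrak{gl}_n(A)$: $\Phi(x)=x^{(p)}+p\Delta(x)$, $\Delta^\alpha(x)=\alpha\Phi(x)+\Delta(x)$. $G_u=\{v\in GL_n(R):\phi(v)=\Phi(u)^{-1}\Phi(uv)\}$. $R^\delta=\{\lambda:\delta\lambda=0\}$. $T$: diagonal matrices in $GL_n(R)$; $W$: permutation matrices; $N=WT$; $N^\delta$: elements of $N$ with all entries in $R^\delta$. $\Phi$ is right compatible with $N$ if $\Phi(ac)=\Phi(a)c^{(p)}$ for all $a\in GL_n(R)$ and $c\in N$. *)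

theory Defs
  imports "HOL-Analysis.Analysis" "HOL-Computational_Algebra.Polynomial"
begin

text \<open>R is the unique (up to isomorphism) complete discrete valuation ring with maximal
ideal pR and residue field an algebraic closure of F_p; phi is the unique lift of Frobenius.
We quantify over all such (R, phi), which is equivalent to fixing the unique one.\<close>

definition dvr_max_p :: "nat \<Rightarrow> 'r::idom itself \<Rightarrow> bool" where
  "dvr_max_p p _ \<longleftrightarrow>
     (of_nat p :: 'r) \<noteq> 0 \<and> \<not> (of_nat p :: 'r) dvd 1 \<and>
     (\<forall>a::'r. a \<noteq> 0 \<longrightarrow> (\<exists>u k. u dvd 1 \<and> a = u * of_nat p ^ k))"

definition p_adically_complete :: "nat \<Rightarrow> 'r::idom itself \<Rightarrow> bool" where
  "p_adically_complete p _ \<longleftrightarrow>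
     (\<forall>s::nat \<Rightarrow> 'r.
        (\<forall>k. \<exists>M. \<forall>m\<ge>M. \<forall>m'\<ge>M. (of_nat p ^ k :: 'r) dvd (s m - s m'))
        \<longrightarrow> (\<exists>l. \<forall>k. \<exists>M. \<forall>m\<ge>M. (of_nat p ^ k :: 'r) dvd (s m - l)))"

definition residue_alg_closure_Fp :: "nat \<Rightarrow> 'r::idom itself \<Rightarrow> bool" where
  "residue_alg_closure_Fp p _ \<longleftrightarrow>
     (\<forall>f::'r poly. degree f \<ge> 1 \<and> lead_coeff f = 1 \<longrightarrow> (\<exists>x. (of_nat p :: 'r) dvd poly f x)) \<and>
     (\<forall>a::'r. \<exists>f::int poly. (\<exists>i. \<not> int p dvd coeff f i) \<and>
         (of_nat p :: 'r) dvd poly (map_poly of_int f) a)"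

definition frobenius_lift :: "nat \<Rightarrow> ('r::idom \<Rightarrow> 'r) \<Rightarrow> bool" where
  "frobenius_lift p \<phi> \<longleftrightarrow>
     \<phi> 1 = 1 \<and> (\<forall>a b. \<phi> (a + b) = \<phi> a + \<phi> b) \<and> (\<forall>a b. \<phi> (a * b) = \<phi> a * \<phi> b) \<and>
     (\<forall>a. (of_nat p :: 'r) dvd (\<phi> a - a ^ p))"

definition witt_setting :: "nat \<Rightarrow> ('r::idom \<Rightarrow> 'r) \<Rightarrow> bool" where
  "witt_setting p \<phi> \<longleftrightarrow> prime p \<and> odd p \<and>
     dvr_max_p p TYPE('r) \<and> p_adically_complete p TYPE('r) \<and>
     residue_alg_closure_Fp p TYPE('r) \<and> frobenius_lift p \<phi>"

definition pdelta :: "nat \<Rightarrow> ('r::idom \<Rightarrow> 'r) \<Rightarrow> 'r \<Rightarrow> 'r" where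
  "pdelta p \<phi> a = (THE b. of_nat p * b = \<phi> a - a ^ p)"

definition R_delta :: "nat \<Rightarrow> ('r::idom \<Rightarrow> 'r) \<Rightarrow> 'r set" where
  "R_delta p \<phi> = {a. pdelta p \<phi> a = 0}"

definition entrywise :: "('r \<Rightarrow> 'r) \<Rightarrow> 'r^'n^'n \<Rightarrow> 'r^'n^'n" where
  "entrywise f M = (\<chi> i j. f (M $ i $ j))"

definition ppow :: "nat \<Rightarrow> 'r::comm_ring_1^'n^'n \<Rightarrow> 'r^'n^'n" where
  "ppow p M = entrywise (\<lambda>a. a ^ p) M"

definition GL :: "('r::comm_ring_1^'n^'n) set" where
  "GL = {M. invertible M}"

definition det_inv :: "'r::comm_ring_1^'n::finite^'n \<Rightarrow> 'r" where
  "det_inv M = (THE y. det M * y = 1)"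

inductive_set poly_det_funs :: "('r::comm_ring_1^'n::finite^'n \<Rightarrow> 'r) set" where
  pf_const: "(\<lambda>x. c) \<in> poly_det_funs"
| pf_coord: "(\<lambda>x. x $ i $ j) \<in> poly_det_funs"
| pf_detinv: "det_inv \<in> poly_det_funs"
| pf_add: "f \<in> poly_det_funs \<Longrightarrow> g \<in> poly_det_funs \<Longrightarrow> (\<lambda>x. f x + g x) \<in> poly_det_funs"
| pf_mult: "f \<in> poly_det_funs \<Longrightarrow> g \<in> poly_det_funs \<Longrightarrow> (\<lambda>x. f x * g x) \<in> poly_det_funs"

text \<open>Elements of A, viewed through evaluation on GL_n(R): p-adic uniform limits of
elements of R[x, det(x)^-1].\<close>
definition in_A :: "nat \<Rightarrow> ('r::idom^'n::finite^'n \<Rightarrow> 'r) \<Rightarrow> bool" where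
  "in_A p f \<longleftrightarrow> (\<forall>k. \<exists>g \<in> poly_det_funs. \<forall>x. invertible x \<longrightarrow> (of_nat p ^ k :: 'r) dvd (f x - g x))"

definition gl_A :: "nat \<Rightarrow> ('r::idom^'n::finite^'n \<Rightarrow> 'r^'n^'n) \<Rightarrow> bool" where
  "gl_A p \<Delta> \<longleftrightarrow> (\<forall>i j. in_A p (\<lambda>x. \<Delta> x $ i $ j))"

definition PhiD :: "nat \<Rightarrow> ('r::comm_ring_1^'n^'n \<Rightarrow> 'r^'n^'n) \<Rightarrow> 'r^'n^'n \<Rightarrow> 'r^'n^'n" where
  "PhiD p \<Delta> x = (\<chi> i j. (x $ i $ j) ^ p + of_nat p * \<Delta> x $ i $ j)"

definition Delta_alpha :: "nat \<Rightarrow> ('r::comm_ring_1^'n::finite^'n \<Rightarrow> 'r^'n^'n) \<Rightarrow> 'r^'n^'n \<Rightarrow> 'r^'n^'n \<Rightarrow> 'r^'n^'n" where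
  "Delta_alpha p \<Delta> \<alpha> x = \<alpha> ** PhiD p \<Delta> x + \<Delta> x"

definition G_u :: "nat \<Rightarrow> ('r::idom \<Rightarrow> 'r) \<Rightarrow> ('r^'n::finite^'n \<Rightarrow> 'r^'n^'n) \<Rightarrow> 'r^'n^'n \<Rightarrow> ('r^'n^'n) set" where
  "G_u p \<phi> \<Delta> u = {v. invertible v \<and> entrywise \<phi> v = matrix_inv (PhiD p \<Delta> u) ** PhiD p \<Delta> (u ** v)}"

definition diag_T :: "('r::comm_ring_1^'n^'n) set" where
  "diag_T = {M. invertible M \<and> (\<forall>i j. i \<noteq> j \<longrightarrow> M $ i $ j = 0)}"

definition perm_W :: "('r::comm_ring_1^'n^'n) set" where
  "perm_W = {M. \<exists>\<sigma>. \<sigma> permutes (UNIV :: 'n set) \<and> M = (\<chi> i j. if j = \<sigma> i then 1 else 0)}"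

definition N_grp :: "('r::comm_ring_1^'n::finite^'n) set" where
  "N_grp = {w ** t | w t. w \<in> perm_W \<and> t \<in> diag_T}"

definition N_delta :: "nat \<Rightarrow> ('r::idom \<Rightarrow> 'r) \<Rightarrow> ('r^'n::finite^'n) set" where
  "N_delta p \<phi> = {c \<in> N_grp. \<forall>i j. c $ i $ j \<in> R_delta p \<phi>}"

definition right_compatible_N :: "nat \<Rightarrow> ('r::comm_ring_1^'n::finite^'n \<Rightarrow> 'r^'n^'n) \<Rightarrow> bool" where
  "right_compatible_N p \<Delta> \<longleftrightarrow>
     (\<forall>a c. invertible a \<longrightarrow> c \<in> N_grp \<longrightarrow> PhiD p \<Delta> (a ** c) = PhiD p \<Delta> a ** ppow p c)"

end

theory Submission
  imports Defs "HOL-Computational_Algebra.Fraction_Field"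
begin

definition mmap :: "('a \<Rightarrow> 'b) \<Rightarrow> 'a^'n^'m \<Rightarrow> 'b^'n^'m" where
  "mmap f M = (\<chi> i j. f (M $ i $ j))"

lemma hom_sum:
  assumes add: "\<And>a b. f (a + b) = f a + f b" and z: "f 0 = 0"
  shows "finite S \<Longrightarrow> f (sum g S) = (\<Sum>x\<in>S. f (g x))"
  by (induction S rule: finite_induct) (auto simp: add z)

lemma mmap_mult:
  fixes f :: "'a::comm_ring_1 \<Rightarrow> 'b::comm_ring_1"
  assumes add: "\<And>a b. f (a + b) = f a + f b" and z: "f 0 = 0"
    and mul: "\<And>a b. f (a * b) = f a * f b"
  shows "mmap f ((A::'a^'k^'m) ** (B::'a^'n^'k)) = mmap f A ** mmap f B"
  unfolding mmap_def matrix_matrix_mult_def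
  by (simp add: vec_eq_iff hom_sum[OF add z] mul)

lemma mmap_mat1:
  assumes "f 0 = 0" "f 1 = 1"
  shows "mmap f (mat 1 :: 'a::{zero,one}^'n^'n) = mat 1"
  using assms by (simp add: mmap_def mat_def vec_eq_iff)

definition emb :: "'a::idom \<Rightarrow> 'a fract" where "emb a = Fract a 1"

lemma emb_add: "emb (a + b) = emb a + emb b" by (simp add: emb_def)
lemma emb_mul: "emb (a * b) = emb a * emb b" by (simp add: emb_def)
lemma emb_0: "emb 0 = 0" by (simp add: emb_def Zero_fract_def)
lemma emb_1: "emb 1 = 1" by (simp add: emb_def One_fract_def)
lemma emb_inj: "emb a = emb b \<Longrightarrow> a = b" by (simp add: emb_def eq_fract)

lemma mmap_emb_inj: "mmap emb A = mmap emb B \<Longrightarrow> A = B"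
  by (auto simp: mmap_def vec_eq_iff emb_inj)

lemma left_inv_right:
  fixes A L :: "'a::idom^'n^'n"
  assumes "L ** A = mat 1"
  shows "A ** L = mat 1"
proof -
  have "mmap emb L ** mmap emb A = mat 1"
    using arg_cong[OF assms, of "mmap emb"]
    by (simp add: mmap_mult[OF emb_add emb_0 emb_mul] mmap_mat1[OF emb_0 emb_1])
  then have "mmap emb A ** mmap emb L = mat 1"
    using matrix_left_right_inverse by blast
  then have "mmap emb (A ** L) = mmap emb (mat 1)"
    by (simp add: mmap_mult[OF emb_add emb_0 emb_mul] mmap_mat1[OF emb_0 emb_1])
  then show ?thesis by (rule mmap_emb_inj)
qed

lemma left_inv_invertible:
  fixes A L :: "'a::idom^'n^'n"
  assumes "L ** A = mat 1"
  shows "invertible A"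
  using assms left_inv_right unfolding invertible_def by blast

lemma matrix_inv_left:
  assumes "invertible A"
  shows "matrix_inv A ** A = mat 1"
  using assms unfolding invertible_def matrix_inv_def by (metis (mono_tags, lifting) someI_ex)

lemma perm_mult:
  fixes A :: "'a::comm_ring_1^'n::finite^'n"
  shows "(\<chi> i j. if j = \<tau> i then 1 else 0) ** A = (\<chi> i. A $ \<tau> i)"
  by (simp add: matrix_matrix_mult_def vec_eq_iff if_distrib if_distribR sum.delta cong: if_cong)

lemma perm_invertible:
  assumes "\<sigma> permutes (UNIV :: 'n::finite set)"
  shows "invertible ((\<chi> i j. if j = \<sigma> i then 1 else 0) :: 'a::idom^'n^'n)"
proof (rule left_inv_invertible)
  show "(\<chi> i j. if j = inv \<sigma> i then 1 else 0) ** ((\<chi> i j. if j = \<sigma> i then 1 else 0) :: 'a::idom^'n^'n) = mat 1"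
    using assms by (simp add: perm_mult vec_eq_iff mat_def permutes_inverses(1) eq_commute)
qed

lemma N_invertible:
  assumes "(c :: 'a::idom^'n::finite^'n) \<in> N_grp"
  shows "invertible c"
  using assms unfolding N_grp_def perm_W_def diag_T_def
  by (auto intro!: invertible_mult perm_invertible)

theorem lemma3p4:
  fixes p :: nat and \<phi> :: "'r::idom \<Rightarrow> 'r"
    and \<Delta> :: "'r^'n::finite^'n \<Rightarrow> 'r^'n^'n" and \<alpha> u :: "'r^'n^'n"
  assumes "witt_setting p \<phi>"
    and "gl_A p \<Delta>"
    and "right_compatible_N p \<Delta>"
    and "invertible u"
    and "entrywise (pdelta p \<phi>) u = Delta_alpha p \<Delta> \<alpha> u"
  shows "N_delta p \<phi> \<subseteq> G_u p \<phi> \<Delta> u"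
proof
  have p0: "(of_nat p :: 'r) \<noteq> 0" using assms(1) by (simp add: witt_setting_def dvr_max_p_def)
  have fl: "frobenius_lift p \<phi>" using assms(1) by (simp add: witt_setting_def)
  have padd: "\<phi> (a + b) = \<phi> a + \<phi> b" and pmul: "\<phi> (a * b) = \<phi> a * \<phi> b" and p1: "\<phi> 1 = 1" for a b
    using fl by (auto simp: frobenius_lift_def)
  have pz: "\<phi> 0 = 0" using padd[of 0 0] by (metis add_cancel_right_right add_0)
  have pd: "of_nat p * pdelta p \<phi> a = \<phi> a - a ^ p" for a
  proof -
    obtain b where b: "\<phi> a - a ^ p = of_nat p * b" using fl unfolding frobenius_lift_def by (meson dvdE)
    have "of_nat p * (THE b. of_nat p * b = \<phi> a - a ^ p) = \<phi> a - a ^ p"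
      by (rule theI[of _ b]) (use b p0 in auto)
    thus ?thesis by (simp add: pdelta_def)
  qed
  let ?Ph = "PhiD p \<Delta> u"
  define B :: "'r^'n^'n" where "B = (\<chi> i j. (if i = j then 1 else 0) + of_nat p * \<alpha> $ i $ j)"
  have phu: "mmap \<phi> u = B ** ?Ph"
  proof -
    have "\<phi> (u $ i $ j) = ?Ph $ i $ j + of_nat p * (\<alpha> ** ?Ph) $ i $ j" for i j
    proof -
      have "\<phi> (u $ i $ j) = u $ i $ j ^ p + of_nat p * pdelta p \<phi> (u $ i $ j)"
        using pd[of "u$i$j"] by simp
      also have "pdelta p \<phi> (u $ i $ j) = (\<alpha> ** ?Ph) $ i $ j + \<Delta> u $ i $ j"
        using arg_cong[OF assms(5), of "\<lambda>M. M $ i $ j"]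
        by (simp add: entrywise_def Delta_alpha_def)
      finally show ?thesis by (simp add: PhiD_def algebra_simps)
    qed
    moreover have "(B ** ?Ph) $ i $ j = ?Ph $ i $ j + of_nat p * (\<alpha> ** ?Ph) $ i $ j" for i j
    proof -
      have "(B ** ?Ph) $ i $ j = (\<Sum>k\<in>UNIV. (if i = k then 1 else 0) * ?Ph $ k $ j
              + of_nat p * (\<alpha> $ i $ k * ?Ph $ k $ j))"
        by (simp add: B_def matrix_matrix_mult_def distrib_right mult.assoc)
      also have "\<dots> = (\<Sum>k\<in>UNIV. (if i = k then 1 else 0) * ?Ph $ k $ j)
              + of_nat p * (\<Sum>k\<in>UNIV. \<alpha> $ i $ k * ?Ph $ k $ j)"
        by (simp add: sum.distrib sum_distrib_left)
      also have "(\<Sum>k\<in>UNIV. (if i = k then 1 else 0) * ?Ph $ k $ j) = ?Ph $ i $ j"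
        by (simp add: if_distrib if_distribR sum.delta cong: if_cong)
      finally show ?thesis by (simp add: matrix_matrix_mult_def)
    qed
    ultimately show ?thesis
      by (simp add: mmap_def vec_eq_iff)
  qed
  obtain v where v: "v ** u = mat 1" using assms(4) unfolding invertible_def by blast
  have "mmap \<phi> v ** mmap \<phi> u = mat 1"
    using arg_cong[OF v, of "mmap \<phi>"]
    by (simp add: mmap_mult[OF padd pz pmul] mmap_mat1[OF pz p1])
  then have "(mmap \<phi> v ** B) ** ?Ph = mat 1" by (simp add: phu matrix_mul_assoc)
  then have invPh: "invertible ?Ph" by (rule left_inv_invertible)
  fix c :: "'r^'n^'n" assume c: "c \<in> N_delta p \<phi>"
  then have cN: "c \<in> N_grp" and cd: "\<And>i j. pdelta p \<phi> (c $ i $ j) = 0"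
    by (auto simp: N_delta_def R_delta_def)
  have "\<phi> (c $ i $ j) = c $ i $ j ^ p" for i j using pd[of "c$i$j"] cd[of i j] by simp
  then have e: "entrywise \<phi> c = ppow p c" by (simp add: entrywise_def ppow_def vec_eq_iff)
  have "PhiD p \<Delta> (u ** c) = ?Ph ** ppow p c"
    using assms(3) assms(4) cN by (simp add: right_compatible_N_def)
  then have "matrix_inv ?Ph ** PhiD p \<Delta> (u ** c) = ppow p c"
    by (simp add: matrix_mul_assoc matrix_inv_left[OF invPh])
  then show "c \<in> G_u p \<phi> \<Delta> u"
    using N_invertible[OF cN] e by (simp add: G_u_def)
qed

end
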